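(* Let $j\in[m]$, $r_j\in[0,1]$, and let $\mathbf{x}=(\mathbf{x}_1,\dots,\mathbf{x}_n)$ and $\mathbf{y}=(\mathbf{y}_1,\dots,\mathbf{y}_n)$ be Generalized Nash equilibria of $G^{(2)}$ with $\mathbf{x}_T^{(j)}=\mathbf{y}_T^{(j)}=r_j$. If $0<x_{ij}<y_{ij}$ for some $i\in[n]$, then $\mathbf{x}_i$ is of Type II or $\mathbf{y}_i$ is of Type II.
   Context: $G^{(2)}$ is a Fragile multi-CPR Game with $n\ge1$ players and $m\ge1$ CPRs: $[k]=\{1,\dots,k\}$, $C_m=\{(x_1,\dots,x_m)\in[0,1]^m:\sum_j x_j\le1\}$, $\mathcal{C}_n=\prod_{i\in[n]}C_m$, $\mathcal{C}_{-i}=\prod_{[n]\setminus\{i\}}C_m$. A profile is $\mathbf{x}=(\mathbf{x}_1,\dots,\mathbf{x}_n)$, $\mathbf{x}_i=(x_{i1},\dots,x_{im})$; write $\mathbf{x}=(\mathbf{x}_i,\mathbf{x}_{-i})$; $\mathbf{x}_T^{(j)}=\sum_i x_{ij}$, $\mathbf{x}_T^{j|i}=\sum_{\ell\ne i}x_{\ell j}$. Each CPR $j$ has return rate $\mathcal{R}_j(t)>1$ and failure probability $p_j(t)\in[0,1]$; each player $i$ has parameters $a_i,k_i$. $\mathcal{F}_{ij}(t)=(\mathcal{R}_j(t)-1)^{a_i}(1-p_j(t))-k_ip_j(t)$; utility $\mathcal{V}_i(\mathbf{x}_i;\mathbf{x}_{-i})=\sum_j x_{ij}^{a_i}\mathcal{F}_{ij}(\mathbf{x}_T^{(j)})$.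 Assumption: (1) $p_j(0)=0$, $p_j(t)=1$ for $t\ge1$; (2) $a_i\in(0,1]$, $k_i>0$; (3) each $\mathcal{F}_{ij}$ (continuous on $[0,1]$) has strictly negative first and second derivatives on $(0,1)$. $\omega_{ij}\in(0,1)$ is the unique zero of $\mathcal{F}_{ij}$ in $(0,1)$. $A(\mathbf{x}_{-i})=\{j:\mathbf{x}_T^{j|i}<\omega_{ij}\}$. $\vartheta_i(\mathbf{x}_{-i})=C_m\cap\big(\prod_{j\in A(\mathbf{x}_{-i})}[0,\omega_{ij}-\mathbf{x}_T^{j|i}]\times\prod_{j\notin A(\mathbf{x}_{-i})}\{0\}\big)$. A Generalized Nash equilibrium is $\mathbf{x}\in\mathcal{C}_n$ with, for all $i$, $\mathbf{x}_i\in\vartheta_i(\mathbf{x}_{-i})$ and $\mathcal{V}_i(\mathbf{x}_i;\mathbf{x}_{-i})\ge\mathcal{V}_i(\mathbf{z};\mathbf{x}_{-i})$ for all $\mathbf{z}\in\vartheta_i(\mathbf{x}_{-i})$. $\psi_{ij}(x;s)=x\,\mathcal{F}_{ij}'(x+s)+a_i\mathcal{F}_{ij}(x+s)$. For a GNE $\mathbf{x}$: $J_{\mathbf{x}_{-i}}=\{j\in A(\mathbf{x}_{-i}):x_{ij}\ne0\}$; $\mathbf{x}_i$ is of Type I if $\sum_{j\in J_{\mathbf{x}_{-i}}}x_{ij}<1$ and $\psi_{ij}(x_{ij};\mathbf{x}_T^{j|i})=0$ for all $j\in J_{\mathbf{x}_{-i}}$; of Type II if $\sum_{j\in J_{\mathbf{x}_{-i}}}x_{ij}=1$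 and there is $\kappa_0\ge0$ with $x_{ij}^{a_i-1}\psi_{ij}(x_{ij};\mathbf{x}_T^{j|i})=\kappa_0$ for all $j\in J_{\mathbf{x}_{-i}}$. *)

theory Defs
  imports "HOL-Analysis.Analysis"
begin

text \<open>Players are indexed by 1..n, CPRs by 1..m.  A profile is
  x :: nat => nat => real, with x i j the investment of player i in CPR j.
  R j t: return rate of CPR j; p j t: failure probability of CPR j;
  a i, k i: player parameters.\<close>

definition F :: "(nat \<Rightarrow> real \<Rightarrow> real) \<Rightarrow> (nat \<Rightarrow> real \<Rightarrow> real) \<Rightarrow> (nat \<Rightarrow> real) \<Rightarrow> (nat \<Rightarrow> real)
    \<Rightarrow> nat \<Rightarrow> nat \<Rightarrow> real \<Rightarrow> real" where
  "F R p a k i j t = (R j t - 1) powr (a i) * (1 - p j t) - k i * p j t"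

definition game_assms :: "nat \<Rightarrow> nat \<Rightarrow> (nat \<Rightarrow> real \<Rightarrow> real) \<Rightarrow> (nat \<Rightarrow> real \<Rightarrow> real)
    \<Rightarrow> (nat \<Rightarrow> real) \<Rightarrow> (nat \<Rightarrow> real) \<Rightarrow> bool" where
  "game_assms n m R p a k \<longleftrightarrow> n \<ge> 1 \<and> m \<ge> 1 \<and>
     (\<forall>j\<in>{1..m}. (\<forall>t\<in>{0..1}. R j t > 1) \<and> (\<forall>t\<ge>0. 0 \<le> p j t \<and> p j t \<le> 1)
        \<and> p j 0 = 0 \<and> (\<forall>t\<ge>1. p j t = 1)) \<and>
     (\<forall>i\<in>{1..n}. 0 < a i \<and> a i \<le> 1 \<and> k i > 0) \<and>
     (\<forall>i\<in>{1..n}. \<forall>j\<in>{1..m}.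
        continuous_on {0..1} (F R p a k i j) \<and>
        (\<forall>t\<in>{0<..<1}. (F R p a k i j has_real_derivative deriv (F R p a k i j) t) (at t)
            \<and> deriv (F R p a k i j) t < 0
            \<and> (deriv (F R p a k i j) has_real_derivative deriv (deriv (F R p a k i j)) t) (at t)
            \<and> deriv (deriv (F R p a k i j)) t < 0))"

definition omega where
  "omega R p a k i j = (THE w. 0 < w \<and> w < 1 \<and> F R p a k i j w = 0)"

definition CPR_simplex :: "nat \<Rightarrow> (nat \<Rightarrow> real) set" where
  "CPR_simplex m = {z. (\<forall>j\<in>{1..m}. 0 \<le> z j \<and> z j \<le> 1) \<and> (\<Sum>j=1..m. z j) \<le> 1}"

definition profiles :: "nat \<Rightarrow> nat \<Rightarrow> (nat \<Rightarrow> nat \<Rightarrow> real) set" where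
  "profiles n m = {x. \<forall>i\<in>{1..n}. x i \<in> CPR_simplex m}"

definition xT :: "nat \<Rightarrow> (nat \<Rightarrow> nat \<Rightarrow> real) \<Rightarrow> nat \<Rightarrow> real" where
  "xT n x j = (\<Sum>i=1..n. x i j)"

definition xT_others :: "nat \<Rightarrow> (nat \<Rightarrow> nat \<Rightarrow> real) \<Rightarrow> nat \<Rightarrow> nat \<Rightarrow> real" where
  "xT_others n x i j = (\<Sum>l\<in>{1..n} - {i}. x l j)"

definition Aset where
  "Aset n m R p a k x i = {j\<in>{1..m}. xT_others n x i j < omega R p a k i j}"

definition vartheta where
  "vartheta n m R p a k x i = CPR_simplex m \<inter>
     {z. (\<forall>j\<in>Aset n m R p a k x i. 0 \<le> z j \<and> z j \<le> omega R p a k i j - xT_others n x i j)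
       \<and> (\<forall>j\<in>{1..m} - Aset n m R p a k x i. z j = 0)}"

definition V where
  "V n m R p a k i z x = (\<Sum>j=1..m. z j powr (a i) * F R p a k i j (z j + xT_others n x i j))"

definition GNE where
  "GNE n m R p a k x \<longleftrightarrow> x \<in> profiles n m \<and>
     (\<forall>i\<in>{1..n}. x i \<in> vartheta n m R p a k x i \<and>
        (\<forall>z\<in>vartheta n m R p a k x i. V n m R p a k i (x i) x \<ge> V n m R p a k i z x))"

definition psi where
  "psi R p a k i j y s = y * deriv (F R p a k i j) (y + s) + a i * F R p a k i j (y + s)"

definition Jset where
  "Jset n m R p a k x i = {j\<in>Aset n m R p a k x i. x i j \<noteq> 0}"

definition typeI where
  "typeI n m R p a k x i \<longleftrightarrow> (\<Sum>j\<in>Jset n m R p a k x i. x i j) < 1 \<and>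
     (\<forall>j\<in>Jset n m R p a k x i. psi R p a k i j (x i j) (xT_others n x i j) = 0)"

definition typeII where
  "typeII n m R p a k x i \<longleftrightarrow> (\<Sum>j\<in>Jset n m R p a k x i. x i j) = 1 \<and>
     (\<exists>\<kappa>0\<ge>0. \<forall>j\<in>Jset n m R p a k x i.
        x i j powr (a i - 1) * psi R p a k i j (x i j) (xT_others n x i j) = \<kappa>0)"

end

theory Submission
  imports Defs
begin

context
  fixes n m :: nat and R p :: "nat \<Rightarrow> real \<Rightarrow> real" and a k :: "nat \<Rightarrow> real"
  assumes ga: "game_assms n m R p a k"
begin

lemma gaJ:
  assumes "j \<in> {1..m}"
  shows "(\<forall>t\<in>{0..1}. R j t > 1) \<and> (\<forall>t\<ge>0. 0 \<le> p j t \<and> p j t \<le> 1)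
        \<and> p j 0 = 0 \<and> (\<forall>t\<ge>1. p j t = 1)"
  using bspec[OF ga[unfolded game_assms_def, THEN conjunct2, THEN conjunct2, THEN conjunct1] assms] .

lemma gaI:
  assumes "i \<in> {1..n}"
  shows "0 < a i \<and> a i \<le> 1 \<and> k i > 0"
  using bspec[OF ga[unfolded game_assms_def, THEN conjunct2, THEN conjunct2, THEN conjunct2, THEN conjunct1] assms] .

lemma gaIJ:
  assumes "i \<in> {1..n}" "j \<in> {1..m}"
  shows "continuous_on {0..1} (F R p a k i j) \<and>
        (\<forall>t\<in>{0<..<1}. (F R p a k i j has_real_derivative deriv (F R p a k i j) t) (at t)
            \<and> deriv (F R p a k i j) t < 0
            \<and> (deriv (F R p a k i j) has_real_derivative deriv (deriv (F R p a k i j)) t) (at t)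
            \<and> deriv (deriv (F R p a k i j)) t < 0)"
  using bspec[OF bspec[OF ga[unfolded game_assms_def, THEN conjunct2, THEN conjunct2, THEN conjunct2, THEN conjunct2] assms(1)] assms(2)] .

lemma gaF_cont: "i \<in> {1..n} \<Longrightarrow> j \<in> {1..m} \<Longrightarrow> continuous_on {0..1} (F R p a k i j)"
  using gaIJ by blast

lemma gaF_der: "i \<in> {1..n} \<Longrightarrow> j \<in> {1..m} \<Longrightarrow> 0 < t \<Longrightarrow> t < 1 \<Longrightarrow>
   (F R p a k i j has_real_derivative deriv (F R p a k i j) t) (at t) \<and> deriv (F R p a k i j) t < 0"
  using gaIJ by auto

lemma omega_props:
  assumes i: "i \<in> {1..n}" and j: "j \<in> {1..m}"
  shows "0 < omega R p a k i j \<and> omega R p a k i j < 1 \<and> F R p a k i j (omega R p a k i j) = 0"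
proof -
  let ?F = "F R p a k i j"
  have cont: "continuous_on {0..1} ?F" using gaF_cont[OF i j] .
  have der: "\<And>t. 0 < t \<Longrightarrow> t < 1 \<Longrightarrow> (?F has_real_derivative deriv ?F t) (at t) \<and> deriv ?F t < 0"
    using gaF_der[OF i j] by blast
  have R0: "R j 0 > 1" and p0: "p j 0 = 0" and p1: "p j 1 = 1"
    using gaJ[OF j] by auto
  have ak: "0 < a i" "k i > 0" using gaI[OF i] by auto
  have F0: "?F 0 > 0"
  proof -
    have "0 < (R j 0 - 1) powr a i" using R0 by simp
    then show ?thesis using p0 unfolding F_def by simp
  qed
  have F1: "?F 1 < 0" using p1 ak unfolding F_def by simp
  obtain w where w: "0 \<le> w" "w \<le> 1" "?F w = 0"
    using IVT2'[of ?F 1 0 0] F0 F1 cont by force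
  have w01: "0 < w" "w < 1"
  proof -
    show "0 < w" using w F0 by (cases "w = 0") auto
    show "w < 1" using w F1 by (cases "w = 1") auto
  qed
  have dec: "?F u > ?F v" if "0 < u" "u < v" "v < 1" for u v
  proof (rule DERIV_neg_imp_decreasing_open[OF \<open>u < v\<close>])
    fix x assume "u < x" "x < v"
    then have "0 < x" "x < 1" using that by linarith+
    then show "\<exists>y. DERIV ?F x :> y \<and> y < 0" using der by blast
  next
    show "continuous_on {u..v} ?F" by (rule continuous_on_subset[OF cont]) (use that in auto)
  qed
  have uniq: "w' = w" if "0 < w'" "w' < 1" "?F w' = 0" for w'
  proof (rule ccontr)
    assume ne: "w' \<noteq> w"
    show False
    proof (cases "w' < w")
      case True then have "?F w' > ?F w" using dec[of w' w] w01 that by blast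
      then show ?thesis using that w by simp
    next
      case False then have "w < w'" using ne by simp
      then have "?F w > ?F w'" using dec[of w w'] w01 that by blast
      then show ?thesis using that w by simp
    qed
  qed
  have "omega R p a k i j = w"
    unfolding omega_def
  proof (rule the_equality)
    show "0 < w \<and> w < 1 \<and> ?F w = 0" using w w01 by blast
    show "\<And>w'. 0 < w' \<and> w' < 1 \<and> ?F w' = 0 \<Longrightarrow> w' = w" using uniq by blast
  qed
  then show ?thesis using w w01 by simp
qed

lemma GNE_mem:
  assumes "GNE n m R p a k x" "i \<in> {1..n}"
  shows "x i \<in> vartheta n m R p a k x i" "x i \<in> CPR_simplex m"
    "\<And>l j. l \<in> {1..n} \<Longrightarrow> j \<in> {1..m} \<Longrightarrow> 0 \<le> x l j"
    "\<And>f. f \<in> vartheta n m R p a k x i \<Longrightarrow> V n m R p a k i f x \<le> V n m R p a k i (x i) x"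
  using assms unfolding GNE_def profiles_def CPR_simplex_def by auto

lemma others_nonneg:
  assumes "GNE n m R p a k x" "j \<in> {1..m}"
  shows "0 \<le> xT_others n x i j"
  unfolding xT_others_def
  by (rule sum_nonneg) (use assms GNE_mem(3)[OF assms(1)] in auto)

lemma xT_split:
  assumes "i \<in> {1..n}"
  shows "xT n x j = x i j + xT_others n x i j"
  unfolding xT_def xT_others_def
  using sum.remove[of "{1..n}" i "\<lambda>l. x l j"] assms by auto

lemma sum_upd:
  fixes f :: "nat \<Rightarrow> real"
  assumes "j \<in> {1..m}"
  shows "(\<Sum>l=1..m. (f(j:=v)) l) = (\<Sum>l=1..m. f l) - f j + v"
proof -
  have "(\<Sum>l=1..m. (f(j:=v)) l) = v + (\<Sum>l\<in>{1..m}-{j}. f l)"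
    using sum.remove[of "{1..m}" j "f(j:=v)"] assms by (auto intro!: sum.cong)
  moreover have "(\<Sum>l=1..m. f l) = f j + (\<Sum>l\<in>{1..m}-{j}. f l)"
    using sum.remove[of "{1..m}" j f] assms by auto
  ultimately show ?thesis by simp
qed

lemma V_upd:
  assumes "j \<in> {1..m}"
  shows "V n m R p a k i (f(j:=v)) x = V n m R p a k i f x
     - f j powr a i * F R p a k i j (f j + xT_others n x i j)
     + v powr a i * F R p a k i j (v + xT_others n x i j)"
proof -
  let ?g = "\<lambda>f l. f l powr a i * F R p a k i l (f l + xT_others n x i l)"
  have "V n m R p a k i (f(j:=v)) x = ?g (f(j:=v)) j + (\<Sum>l\<in>{1..m}-{j}. ?g f l)"
    unfolding V_def using sum.remove[of "{1..m}" j "?g (f(j:=v))"] assms by (auto intro!: sum.cong)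
  moreover have "V n m R p a k i f x = ?g f j + (\<Sum>l\<in>{1..m}-{j}. ?g f l)"
    unfolding V_def using sum.remove[of "{1..m}" j "?g f"] assms by auto
  ultimately show ?thesis by simp
qed

lemma h_deriv:
  assumes i: "i \<in> {1..n}" and j: "j \<in> {1..m}" and u: "0 < u" and us: "0 < u + s" "u + s < 1"
  shows "((\<lambda>v. v powr a i * F R p a k i j (v + s)) has_real_derivative
           u powr (a i - 1) * psi R p a k i j u s) (at u)"
proof -
  let ?F = "F R p a k i j"
  have dF: "(?F has_real_derivative deriv ?F (u + s)) (at (u + s))"
    using gaF_der[OF i j us] by auto
  have dF2: "((\<lambda>v. ?F (v + s)) has_real_derivative deriv ?F (u + s) * 1) (at u)"
  proof -
    have g: "((\<lambda>v. v + s) has_real_derivative 1) (at u)" by (auto intro!: derivative_eq_intros)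
    have "DERIV ?F ((\<lambda>v. v + s) u) :> deriv ?F (u + s)" using dF by simp
    from DERIV_chain2[OF this g] show ?thesis .
  qed
  have dP: "((\<lambda>v. v powr a i) has_real_derivative a i * u powr (a i - 1)) (at u)"
    by (rule has_real_derivative_powr[OF u])
  have "((\<lambda>v. v powr a i * ?F (v + s)) has_real_derivative
          a i * u powr (a i - 1) * ?F (u + s) + deriv ?F (u + s) * u powr a i) (at u)"
    using DERIV_mult[OF dP dF2] by simp
  moreover have "a i * u powr (a i - 1) * ?F (u + s) + deriv ?F (u + s) * u powr a i
      = u powr (a i - 1) * psi R p a k i j u s"
  proof -
    have "u powr a i = u powr (a i - 1) * u" using u by (simp add: powr_diff)
    then show ?thesis unfolding psi_def by (simp add: algebra_simps)
  qed
  ultimately show ?thesis by simp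
qed

lemma upd_mem:
  assumes f: "f \<in> vartheta n m R p a k x i" and jA: "j \<in> Aset n m R p a k x i"
    and v: "0 \<le> v" "v \<le> omega R p a k i j - xT_others n x i j" "v \<le> 1"
    and s: "(\<Sum>l=1..m. f l) - f j + v \<le> 1"
  shows "f(j:=v) \<in> vartheta n m R p a k x i"
proof -
  have jm: "j \<in> {1..m}" using jA unfolding Aset_def by auto
  show ?thesis
    using f jA v s sum_upd[OF jm, of f v]
    unfolding vartheta_def CPR_simplex_def by auto
qed

lemma key:
  assumes G: "GNE n m R p a k x" and i: "i \<in> {1..n}" and j: "j \<in> {1..m}" and u: "0 < x i j"
  shows "j \<in> Aset n m R p a k x i"
    and "0 < x i j + xT_others n x i j" "x i j + xT_others n x i j < 1"
    and "0 \<le> psi R p a k i j (x i j) (xT_others n x i j)"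
    and "x i j < omega R p a k i j - xT_others n x i j"
    and "(\<Sum>l=1..m. x i l) < 1 \<Longrightarrow> psi R p a k i j (x i j) (xT_others n x i j) \<le> 0"
    and "\<And>j'. j' \<in> {1..m} \<Longrightarrow> j' \<noteq> j \<Longrightarrow> 0 < x i j' \<Longrightarrow>
          x i j powr (a i - 1) * psi R p a k i j (x i j) (xT_others n x i j)
          \<le> x i j' powr (a i - 1) * psi R p a k i j' (x i j') (xT_others n x i j')"
proof -
  let ?s = "xT_others n x i j" and ?w = "omega R p a k i j" and ?u = "x i j"
  let ?F = "F R p a k i j"
  define h where "h = (\<lambda>v. v powr a i * ?F (v + ?s))"
  note mem = GNE_mem[OF G i]
  have s0: "0 \<le> ?s" by (rule others_nonneg[OF G j])
  have om: "0 < ?w" "?w < 1" "?F ?w = 0" using omega_props[OF i j] by auto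
  show jA: "j \<in> Aset n m R p a k x i"
  proof (rule ccontr)
    assume "j \<notin> Aset n m R p a k x i"
    then have "x i j = 0" using mem(1) j unfolding vartheta_def by auto
    then show False using u by simp
  qed
  have ule: "?u \<le> ?w - ?s" using mem(1) jA unfolding vartheta_def by auto
  show pos: "0 < ?u + ?s" using u s0 by simp
  show lt1: "?u + ?s < 1" using ule om by simp
  have hd: "(h has_real_derivative ?u powr (a i - 1) * psi R p a k i j ?u ?s) (at ?u)"
    unfolding h_def by (rule h_deriv[OF i j u pos lt1])
  have pp: "0 < ?u powr (a i - 1)" using u by simp
  have sumle: "(\<Sum>l=1..m. x i l) \<le> 1" using mem(2) unfolding CPR_simplex_def by auto
  have Vh: "V n m R p a k i ((x i)(j:=v)) x = V n m R p a k i (x i) x - h ?u + h v" for v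
    unfolding h_def using V_upd[OF j, of i "x i" v x] by simp
  show L1: "0 \<le> psi R p a k i j ?u ?s"
  proof (rule ccontr)
    assume "\<not> ?thesis"
    then have "?u powr (a i - 1) * psi R p a k i j ?u ?s < 0" using pp by (simp add: mult_pos_neg)
    from DERIV_neg_dec_left[OF hd this] obtain d where d: "d > 0" "\<And>t. t > 0 \<Longrightarrow> t < d \<Longrightarrow> h ?u < h (?u - t)"
      by blast
    define t where "t = min d ?u / 2"
    have t: "0 < t" "t < d" "t < ?u" using d u unfolding t_def by auto
    have "(x i)(j := ?u - t) \<in> vartheta n m R p a k x i"
      by (rule upd_mem[OF mem(1) jA]) (use t ule sumle lt1 s0 in auto)
    then have "V n m R p a k i ((x i)(j := ?u - t)) x \<le> V n m R p a k i (x i) x" by (rule mem(4))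
    then have "h (?u - t) \<le> h ?u" using Vh by simp
    then show False using d(2)[OF t(1,2)] by simp
  qed
  show L2: "?u < ?w - ?s"
  proof (rule ccontr)
    assume "\<not> ?thesis"
    then have eq: "?u + ?s = ?w" using ule by simp
    have "deriv ?F ?w < 0" using gaF_der[OF i j om(1,2)] by auto
    then have "psi R p a k i j ?u ?s < 0" unfolding psi_def eq om(3) using u by (simp add: mult_pos_neg)
    then show False using L1 by simp
  qed
  show "psi R p a k i j ?u ?s \<le> 0" if sl: "(\<Sum>l=1..m. x i l) < 1"
  proof (rule ccontr)
    assume "\<not> ?thesis"
    then have "0 < ?u powr (a i - 1) * psi R p a k i j ?u ?s" using pp by simp
    from DERIV_pos_inc_right[OF hd this] obtain d where d: "d > 0" "\<And>t. t > 0 \<Longrightarrow> t < d \<Longrightarrow> h ?u < h (?u + t)"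
      by blast
    define t where "t = min d (min (?w - ?s - ?u) (1 - (\<Sum>l=1..m. x i l))) / 2"
    have t: "0 < t" "t < d" "t < ?w - ?s - ?u" "t < 1 - (\<Sum>l=1..m. x i l)"
      using d L2 sl unfolding t_def by auto
    have "(x i)(j := ?u + t) \<in> vartheta n m R p a k x i"
      by (rule upd_mem[OF mem(1) jA]) (use t u om s0 in auto)
    then have "V n m R p a k i ((x i)(j := ?u + t)) x \<le> V n m R p a k i (x i) x" by (rule mem(4))
    then have "h (?u + t) \<le> h ?u" using Vh by simp
    then show False using d(2)[OF t(1,2)] by simp
  qed
  show "?u powr (a i - 1) * psi R p a k i j ?u ?s
          \<le> x i j' powr (a i - 1) * psi R p a k i j' (x i j') (xT_others n x i j')"
    if j': "j' \<in> {1..m}" "j' \<noteq> j" "0 < x i j'" for j'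
  proof (rule ccontr)
    let ?s' = "xT_others n x i j'" and ?v = "x i j'"
    define h' where "h' = (\<lambda>v. v powr a i * F R p a k i j' (v + ?s'))"
    have s0': "0 \<le> ?s'" by (rule others_nonneg[OF G j'(1)])
    have jA': "j' \<in> Aset n m R p a k x i"
    proof (rule ccontr)
      assume "j' \<notin> Aset n m R p a k x i"
      then have "x i j' = 0" using mem(1) j' unfolding vartheta_def by auto
      then show False using j' by simp
    qed
    have ule': "?v \<le> omega R p a k i j' - ?s'" using mem(1) jA' unfolding vartheta_def by auto
    have om': "omega R p a k i j' < 1" using omega_props[OF i j'(1)] by auto
    have hd': "(h' has_real_derivative ?v powr (a i - 1) * psi R p a k i j' ?v ?s') (at ?v)"
      unfolding h'_def by (rule h_deriv[OF i j'(1) j'(3)]) (use j'(3) s0' ule' om' in auto)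
    define Dj where "Dj = ?u powr (a i - 1) * psi R p a k i j ?u ?s"
    define Dj' where "Dj' = ?v powr (a i - 1) * psi R p a k i j' ?v ?s'"
    assume "\<not> ?u powr (a i - 1) * psi R p a k i j ?u ?s \<le> ?v powr (a i - 1) * psi R p a k i j' ?v ?s'"
    then have gt: "0 < Dj * 1 + Dj' * (-1)" unfolding Dj_def Dj'_def by simp
    have d1: "((\<lambda>t. h (?u + t)) has_real_derivative Dj * 1) (at 0)"
      by (rule DERIV_chain2) (use hd in \<open>auto simp: Dj_def intro!: derivative_eq_intros\<close>)
    have d2: "((\<lambda>t. h' (?v - t)) has_real_derivative Dj' * (-1)) (at 0)"
      by (rule DERIV_chain2) (use hd' in \<open>auto simp: Dj'_def intro!: derivative_eq_intros\<close>)
    from DERIV_pos_inc_right[OF DERIV_add[OF d1 d2] gt] obtain d where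
      d: "d > 0" "\<And>t. t > 0 \<Longrightarrow> t < d \<Longrightarrow> h (?u + 0) + h' (?v - 0) < h (?u + (0 + t)) + h' (?v - (0 + t))"
      by blast
    define t where "t = min d (min (?w - ?s - ?u) ?v) / 2"
    have t: "0 < t" "t < d" "t < ?w - ?s - ?u" "t < ?v"
      using d L2 j' unfolding t_def by auto
    have m1: "(x i)(j' := ?v - t) \<in> vartheta n m R p a k x i"
      by (rule upd_mem[OF mem(1) jA']) (use t sumle ule' om' s0' in auto)
    have "(x i)(j' := ?v - t, j := ?u + t) \<in> vartheta n m R p a k x i"
      by (rule upd_mem[OF m1 jA]) (use t sumle u om s0 j' sum_upd[OF j'(1), of "x i" "?v - t"] in auto)
    then have "V n m R p a k i ((x i)(j' := ?v - t, j := ?u + t)) x \<le> V n m R p a k i (x i) x" by (rule mem(4))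
    moreover have "V n m R p a k i ((x i)(j' := ?v - t, j := ?u + t)) x
        = V n m R p a k i (x i) x - h ?u + h (?u + t) - h' ?v + h' (?v - t)"
      using V_upd[OF j, of i "(x i)(j' := ?v - t)" "?u + t" x] V_upd[OF j'(1), of i "x i" "?v - t" x] j'(2)
      unfolding h_def h'_def by simp
    ultimately show False using d(2)[OF t(1,2)] by simp
  qed
qed

end

theorem lemma11:
  fixes n m :: nat and R p :: "nat \<Rightarrow> real \<Rightarrow> real" and a k :: "nat \<Rightarrow> real"
    and x y :: "nat \<Rightarrow> nat \<Rightarrow> real" and i j :: nat and r :: real
  assumes "game_assms n m R p a k"
    and "j \<in> {1..m}" and "0 \<le> r" and "r \<le> 1"
    and "GNE n m R p a k x" and "GNE n m R p a k y"
    and "xT n x j = r" and "xT n y j = r"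
    and "i \<in> {1..n}" and "0 < x i j" and "x i j < y i j"
  shows "typeII n m R p a k x i \<or> typeII n m R p a k y i"
proof -
  note ga = assms(1)
  let ?F = "F R p a k i j"
  let ?sx = "xT_others n x i j" and ?sy = "xT_others n y i j"
  have y0: "0 < y i j" using assms(10,11) by simp
  note kx = key[OF ga assms(5) assms(9) assms(2) assms(10)]
  note ky = key[OF ga assms(6) assms(9) assms(2) y0]
  have rx: "x i j + ?sx = r" using xT_split[OF ga assms(9), of x j] assms(7) by simp
  have ry: "y i j + ?sy = r" using xT_split[OF ga assms(9), of y j] assms(8) by simp
  have r01: "0 < r" "r < 1" using kx(2,3) rx by auto
  have dneg: "deriv ?F r < 0" using gaF_der[OF ga assms(9) assms(2) r01] by blast
  have psiy: "0 \<le> y i j * deriv ?F r + a i * ?F r"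
    using ky(4) ry unfolding psi_def by simp
  have sumle: "(\<Sum>l=1..m. x i l) \<le> 1"
    using GNE_mem(2)[OF ga assms(5,9)] unfolding CPR_simplex_def by auto
  have xnn: "\<And>l. l \<in> {1..m} \<Longrightarrow> 0 \<le> x i l" using GNE_mem(3)[OF ga assms(5,9) assms(9)] by blast
  show ?thesis
  proof (cases "(\<Sum>l=1..m. x i l) < 1")
    case True
    have "x i j * deriv ?F r + a i * ?F r \<le> 0"
      using kx(6)[OF True] rx unfolding psi_def by simp
    moreover have "y i j * deriv ?F r < x i j * deriv ?F r"
      using assms(11) dneg by (simp add: mult_strict_right_mono_neg)
    ultimately show ?thesis using psiy by linarith
  next
    case False
    then have s1: "(\<Sum>l=1..m. x i l) = 1" using sumle by linarith
    let ?J = "Jset n m R p a k x i"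
    have Jsub: "?J \<subseteq> {1..m}" unfolding Jset_def Aset_def by auto
    have "(\<Sum>l\<in>?J. x i l) = (\<Sum>l=1..m. x i l)"
    proof (rule sum.mono_neutral_left)
      show "\<forall>l\<in>{1..m} - ?J. x i l = 0"
      proof
        fix l assume l: "l \<in> {1..m} - ?J"
        show "x i l = 0"
        proof (rule ccontr)
          assume "x i l \<noteq> 0"
          then have "0 < x i l" using xnn l by force
          then have "l \<in> Aset n m R p a k x i" using key(1)[OF ga assms(5) assms(9)] l by blast
          then show False using l \<open>x i l \<noteq> 0\<close> unfolding Jset_def by blast
        qed
      qed
    qed (use Jsub in auto)
    then have sJ: "(\<Sum>l\<in>?J. x i l) = 1" using s1 by simp
    define \<kappa> where "\<kappa> = x i j powr (a i - 1) * psi R p a k i j (x i j) ?sx"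
    have k0: "0 \<le> \<kappa>" unfolding \<kappa>_def using kx(4) by simp
    have "\<forall>j'\<in>?J. x i j' powr (a i - 1) * psi R p a k i j' (x i j') (xT_others n x i j') = \<kappa>"
    proof
      fix j' assume j': "j' \<in> ?J"
      then have j'm: "j' \<in> {1..m}" and j'0: "x i j' \<noteq> 0" using Jsub unfolding Jset_def by auto
      have j'p: "0 < x i j'" using xnn[OF j'm] j'0 by simp
      show "x i j' powr (a i - 1) * psi R p a k i j' (x i j') (xT_others n x i j') = \<kappa>"
      proof (cases "j' = j")
        case True then show ?thesis unfolding \<kappa>_def by simp
      next
        case False
        note kj' = key[OF ga assms(5) assms(9) j'm j'p]
        show ?thesis unfolding \<kappa>_def
          using kx(7)[OF j'm False j'p] kj'(7)[OF assms(2) _ assms(10)] False by fastforce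
      qed
    qed
    then have "typeII n m R p a k x i" unfolding typeII_def using sJ k0 by blast
    then show ?thesis by simp
  qed
qed

end
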